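(* Let $(\mathbf a^{\langle t\rangle},\mathbf b^{\langle t\rangle})_{t\ge0}$ be the re-parameterized Population EM iterates for Model 2 (defined in the context). If $\langle\mathbf b^{\langle 0\rangle},\boldsymbol\theta^*\rangle=0$, then $(\mathbf a^{\langle t\rangle},\mathbf b^{\langle t\rangle})\to(\mathbf 0,\mathbf 0)$ as $t\to\infty$.
   Context: $\phi_d$ is the density of $N(\mathbf 0,I_d)$ (the known covariance is taken to be $I_d$). Model 2: $\boldsymbol\mu_1^*,\boldsymbol\mu_2^*\in\mathbb{R}^d$ and $\mathbf Y\sim\tfrac12N(\boldsymbol\mu_1^*,I_d)+\tfrac12N(\boldsymbol\mu_2^*,I_d)$. Let $v_d(\mathbf y,\boldsymbol\mu_1,\boldsymbol\mu_2)=\frac{\phi_d(\mathbf y-\boldsymbol\mu_1)}{\phi_d(\mathbf y-\boldsymbol\mu_1)+\phi_d(\mathbf y-\boldsymbol\mu_2)}$. Population EM for Model 2: from $(\boldsymbol\mu_1^{\langle0\rangle},\boldsymbol\mu_2^{\langle0\rangle})$, $\boldsymbol\mu_1^{\langle t+1\rangle}=\frac{\mathbb{E}[v_d(\mathbf Y,\boldsymbol\mu_1^{\langle t\rangle},\boldsymbol\mu_2^{\langle t\rangle})\mathbf Y]}{\mathbb{E}[v_d(\mathbf Y,\boldsymbol\mu_1^{\langle t\rangle},\boldsymbol\mu_2^{\langle t\rangle})]}$, $\boldsymbol\mu_2^{\langle t+1\rangle}=\frac{\mathbb{E}[(1-v_d(\mathbf Y,\boldsymbol\mu_1^{\langle t\rangle},\boldsymbol\mu_2^{\langle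 t\rangle}))\mathbf Y]}{\mathbb{E}[1-v_d(\mathbf Y,\boldsymbol\mu_1^{\langle t\rangle},\boldsymbol\mu_2^{\langle t\rangle})]}$. Re-parameterization: $\mathbf a^{\langle t\rangle}=\frac{\boldsymbol\mu_1^{\langle t\rangle}+\boldsymbol\mu_2^{\langle t\rangle}}2-\frac{\boldsymbol\mu_1^*+\boldsymbol\mu_2^*}2$, $\mathbf b^{\langle t\rangle}=\frac{\boldsymbol\mu_2^{\langle t\rangle}-\boldsymbol\mu_1^{\langle t\rangle}}2$, $\boldsymbol\theta^*=\frac{\boldsymbol\mu_2^*-\boldsymbol\mu_1^*}2$. *)

theory Defs
  imports "HOL-Analysis.Analysis"
begin

definition gauss_pdf :: "'a::euclidean_space \<Rightarrow> real" where
  "gauss_pdf x = (2 * pi) powr (- real DIM('a) / 2) * exp (- (norm x)\<^sup>2 / 2)"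

definition mix_pdf :: "'a::euclidean_space \<Rightarrow> 'a \<Rightarrow> 'a \<Rightarrow> real" where
  "mix_pdf m1s m2s y = gauss_pdf (y - m1s) / 2 + gauss_pdf (y - m2s) / 2"

definition mix_expect :: "'a::euclidean_space \<Rightarrow> 'a \<Rightarrow> ('a \<Rightarrow> 'b::{banach,second_countable_topology}) \<Rightarrow> 'b" where
  "mix_expect m1s m2s f = (\<integral>y. mix_pdf m1s m2s y *\<^sub>R f y \<partial>lborel)"

definition v_d :: "'a::euclidean_space \<Rightarrow> 'a \<Rightarrow> 'a \<Rightarrow> real" where
  "v_d y m1 m2 = gauss_pdf (y - m1) / (gauss_pdf (y - m1) + gauss_pdf (y - m2))"

definition em_step :: "'a::euclidean_space \<Rightarrow> 'a \<Rightarrow> 'a \<times> 'a \<Rightarrow> 'a \<times> 'a" where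
  "em_step m1s m2s p =
     (case p of (m1, m2) \<Rightarrow>
       ((1 / mix_expect m1s m2s (\<lambda>y. v_d y m1 m2)) *\<^sub>R mix_expect m1s m2s (\<lambda>y. v_d y m1 m2 *\<^sub>R y),
        (1 / mix_expect m1s m2s (\<lambda>y. 1 - v_d y m1 m2)) *\<^sub>R mix_expect m1s m2s (\<lambda>y. (1 - v_d y m1 m2) *\<^sub>R y)))"

definition em_iter :: "'a::euclidean_space \<Rightarrow> 'a \<Rightarrow> 'a \<Rightarrow> 'a \<Rightarrow> nat \<Rightarrow> 'a \<times> 'a" where
  "em_iter m1s m2s m10 m20 t = (em_step m1s m2s ^^ t) (m10, m20)"

end

theory Submission
  imports Defs "HOL-Probability.Distributions"
begin


definition LL :: "real \<Rightarrow> real" where "LL x = 1 / (1 + exp x)"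

lemma LL_pos: "0 < LL x" unfolding LL_def by (simp add: add_pos_pos)
lemma LL_lt1: "LL x < 1" unfolding LL_def by (simp add: add_pos_pos)
lemma LL_cont[continuous_intros]: "isCont LL x" unfolding LL_def
  by (intro continuous_intros) (smt (verit) exp_gt_zero)
lemma LL_meas[measurable]: "LL \<in> borel_measurable borel"
  unfolding LL_def by measurable

lemma LL_deriv: "(LL has_real_derivative -(LL x * (1 - LL x))) (at x)"
proof -
  have ne: "1 + exp x \<noteq> 0" by (smt (verit) exp_gt_zero)
  have "((\<lambda>x. 1 / (1 + exp x)) has_real_derivative -(exp x) / (1 + exp x)^2) (at x)"
    by (rule derivative_eq_intros refl | simp add: ne)+ (simp add: power2_eq_square field_simps ne)
  moreover have "-(exp x) / (1 + exp x)^2 = -(LL x * (1 - LL x))"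
    unfolding LL_def using ne by (simp add: field_simps power2_eq_square)
  ultimately show ?thesis unfolding LL_def by simp
qed

lemma N_tendsto_top: "(std_normal_density \<longlongrightarrow> 0) at_top"
proof -
  have "filterlim (\<lambda>x::real. x\<^sup>2 * (1/2)) at_top at_top"
    by (rule filterlim_at_top_mult_tendsto_pos[OF tendsto_const _ filterlim_pow_at_top[OF _ filterlim_ident]]) auto
  then have "filterlim (\<lambda>x::real. - (x\<^sup>2 * (1/2))) at_bot at_top"
    by (rule filterlim_compose[OF filterlim_uminus_at_bot_at_top])
  then have "((\<lambda>x::real. exp (- (x\<^sup>2 * (1/2)))) \<longlongrightarrow> 0) at_top"
    by (rule filterlim_compose[OF exp_at_bot])
  then have "((\<lambda>x::real. (1 / sqrt (2 * pi)) * exp (- (x\<^sup>2 * (1/2)))) \<longlongrightarrow> 0) at_top"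
    by (rule tendsto_mult_right_zero)
  then show ?thesis unfolding std_normal_density_def by simp
qed

lemma N_tendsto_bot: "(std_normal_density \<longlongrightarrow> 0) at_bot"
proof -
  have eq: "(\<lambda>x. std_normal_density (- x)) = std_normal_density"
    by (rule ext) (simp add: std_normal_density_def)
  show ?thesis unfolding filterlim_at_bot_mirror eq by (rule N_tendsto_top)
qed

lemma N_nonneg: "0 \<le> std_normal_density x" by simp

lemma integrable_N_abs: "integrable lborel (\<lambda>x. std_normal_density x * \<bar>x\<bar>)"
  using integrable_std_normal_moment_abs[of 1] by simp
lemma integrable_N_x: "integrable lborel (\<lambda>x. std_normal_density x * x)"
  using integrable_std_normal_moment[of 1] by simp
lemma integral_N_x: "(\<integral>x. std_normal_density x * x \<partial>lborel) = 0"
  using integral_std_normal_moment_odd[of 0] by simp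
lemma integral_N: "(\<integral>x. std_normal_density x \<partial>lborel) = 1"
  by simp

lemma integrable_N_bounded:
  assumes [measurable]: "g \<in> borel_measurable borel" and b: "\<And>x. \<bar>g x\<bar> \<le> C"
  shows "integrable lborel (\<lambda>x. std_normal_density x * g x)"
proof (rule Bochner_Integration.integrable_bound[where f="\<lambda>x. C * std_normal_density x"])
  show "integrable lborel (\<lambda>x. C * std_normal_density x)" by simp
  show "AE x in lborel. norm (std_normal_density x * g x) \<le> norm (C * std_normal_density x)"
  proof (intro always_eventually allI)
    fix x
    have "\<bar>std_normal_density x * g x\<bar> = std_normal_density x * \<bar>g x\<bar>" by (simp add: abs_mult)
    also have "\<dots> \<le> std_normal_density x * C" by (rule mult_left_mono[OF b]) simp
    also have "\<dots> \<le> \<bar>C * std_normal_density x\<bar>" by (simp add: abs_mult mult.commute mult_right_mono)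
    finally show "norm (std_normal_density x * g x) \<le> norm (C * std_normal_density x)" by simp
  qed
qed simp

lemma integrable_N_bounded_x:
  assumes [measurable]: "g \<in> borel_measurable borel" and b: "\<And>x. \<bar>g x\<bar> \<le> C"
  shows "integrable lborel (\<lambda>x. std_normal_density x * g x * x)"
proof (rule Bochner_Integration.integrable_bound[where f="\<lambda>x. C * (std_normal_density x * \<bar>x\<bar>)"])
  show "integrable lborel (\<lambda>x. C * (std_normal_density x * \<bar>x\<bar>))" using integrable_N_abs by simp
  have "\<bar>std_normal_density x * g x * x\<bar> \<le> \<bar>C * (std_normal_density x * \<bar>x\<bar>)\<bar>" for x
  proof -
    have "\<bar>std_normal_density x * g x * x\<bar> = \<bar>g x\<bar> * (std_normal_density x * \<bar>x\<bar>)"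
      by (simp add: abs_mult)
    also have "\<dots> \<le> C * (std_normal_density x * \<bar>x\<bar>)" by (rule mult_right_mono[OF b]) simp
    finally show ?thesis by simp
  qed
  then show "AE x in lborel. norm (std_normal_density x * g x * x) \<le> norm (C * (std_normal_density x * \<bar>x\<bar>))"
    by simp
qed simp

lemma LL_abs: "\<bar>LL x\<bar> \<le> 1" using LL_pos[of x] LL_lt1[of x] by simp
lemma LL2_abs: "\<bar>LL x * (1 - LL x)\<bar> \<le> 1" using LL_pos[of x] LL_lt1[of x]
  by (simp add: abs_mult) (smt (verit, best) mult_le_one)

lemma stein1:
  "(\<integral>y. std_normal_density y * LL (A + \<beta> * y) * y \<partial>lborel)
     = - \<beta> * (\<integral>y. std_normal_density y * (LL (A + \<beta> * y) * (1 - LL (A + \<beta> * y))) \<partial>lborel)"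
proof -
  let ?N = std_normal_density
  define f1 where "f1 y = ?N y * LL (A + \<beta> * y) * y" for y
  define f2 where "f2 y = ?N y * (LL (A + \<beta> * y) * (1 - LL (A + \<beta> * y)))" for y
  define F where "F y = - (?N y * LL (A + \<beta> * y))" for y
  have i1: "integrable lborel f1" unfolding f1_def
    by (rule integrable_N_bounded_x[where C=1]) (auto intro: LL_abs)
  have i2: "integrable lborel f2" unfolding f2_def
    by (rule integrable_N_bounded[where C=1]) (auto intro: LL2_abs)
  have D: "(F has_vector_derivative (f1 y + \<beta> * f2 y)) (at y)" for y
  proof -
    have dL: "((\<lambda>y. LL (A + \<beta> * y)) has_real_derivative (- (LL (A + \<beta> * y) * (1 - LL (A + \<beta> * y)))) * \<beta>) (at y)"
      by (rule DERIV_chain2[OF LL_deriv]) (auto intro!: derivative_eq_intros)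
    have dN: "(?N has_real_derivative (?N y * (- y))) (at y)"
      unfolding std_normal_density_def
      by (auto intro!: derivative_eq_intros simp: power2_eq_square field_simps)
    have "(F has_real_derivative - (?N y * (- y) * LL (A + \<beta> * y) + ?N y * ((- (LL (A + \<beta> * y) * (1 - LL (A + \<beta> * y)))) * \<beta>))) (at y)"
      unfolding F_def by (intro DERIV_minus DERIV_cong[OF DERIV_mult[OF dN dL]]) (simp add: algebra_simps)
    then show ?thesis unfolding f1_def f2_def has_real_derivative_iff_has_vector_derivative[symmetric]
      by (simp add: algebra_simps)
  qed
  have lim0: "(F \<longlongrightarrow> 0) G" if "(?N \<longlongrightarrow> 0) G" for G
  proof (rule Lim_null_comparison[OF _ that])
    show "\<forall>\<^sub>F x in G. norm (F x) \<le> ?N x"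
    proof (intro always_eventually allI)
      fix x
      have "norm (F x) = ?N x * \<bar>LL (A + \<beta> * x)\<bar>" by (simp add: F_def abs_mult)
      also have "\<dots> \<le> ?N x * 1" by (rule mult_left_mono[OF LL_abs]) simp
      finally show "norm (F x) \<le> ?N x" by simp
    qed
  qed
  have "(LBINT y=-\<infinity>..\<infinity>. f1 y + \<beta> * f2 y) = 0 - 0"
  proof (rule interval_integral_FTC_integrable[where F=F])
    show "set_integrable lborel (einterval (-\<infinity>) \<infinity>) (\<lambda>y. f1 y + \<beta> * f2 y)"
      unfolding set_integrable_def using i1 i2 by simp
    show "((F \<circ> real_of_ereal) \<longlongrightarrow> 0) (at_right (-\<infinity>))"
      unfolding ereal_tendsto_simps by (rule lim0[OF N_tendsto_bot])
    show "((F \<circ> real_of_ereal) \<longlongrightarrow> 0) (at_left \<infinity>)"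
      unfolding ereal_tendsto_simps by (rule lim0[OF N_tendsto_top])
    show "isCont (\<lambda>y. f1 y + \<beta> * f2 y) x" for x
      proof -
      have c: "isCont (\<lambda>y. LL (A + \<beta> * y)) x"
        by (rule isCont_o2[OF _ LL_cont]) simp
      show ?thesis unfolding f1_def f2_def std_normal_density_def by (intro continuous_intros c) auto
    qed
  qed (auto intro: D)
  then have "(\<integral>y. f1 y + \<beta> * f2 y \<partial>lborel) = 0"
    by (simp add: interval_lebesgue_integral_def set_lebesgue_integral_def)
  then have "integral\<^sup>L lborel f1 + \<beta> * integral\<^sup>L lborel f2 = 0"
    using i1 i2 by simp
  then show ?thesis unfolding f1_def f2_def by simp
qed


lemma norm_sq_basis: "(norm (z::'a::euclidean_space))\<^sup>2 = (\<Sum>b\<in>Basis. (z \<bullet> b)\<^sup>2)"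
  unfolding power2_norm_eq_inner by (subst euclidean_inner) (simp add: power2_eq_square)

lemma gauss_const: "(2 * pi) powr (- real DIM('a::euclidean_space) / 2) = (1 / sqrt (2 * pi)) ^ DIM('a)"
proof -
  have "(2 * pi) powr (real DIM('a) / 2) = ((2 * pi) powr (1/2)) powr (real DIM('a))"
    by (simp add: powr_powr)
  also have "\<dots> = sqrt (2 * pi) ^ DIM('a)"
    by (simp add: powr_half_sqrt powr_realpow)
  finally have hh: "(2 * pi) powr (real DIM('a) / 2) = sqrt (2 * pi) ^ DIM('a)" .
  have "(2 * pi) powr (- real DIM('a) / 2) = (2 * pi) powr (- (real DIM('a) / 2))"
    by (simp only: minus_divide_left)
  also have "\<dots> = inverse ((2 * pi) powr (real DIM('a) / 2))"
    by (rule powr_minus)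
  also have "\<dots> = inverse (sqrt (2 * pi) ^ DIM('a))" using hh by simp
  also have "\<dots> = (1 / sqrt (2 * pi)) ^ DIM('a)" by (simp add: power_one_over inverse_eq_divide)
  finally show ?thesis .
qed

lemma gauss_pdf_prod: "gauss_pdf (z::'a::euclidean_space) = (\<Prod>b\<in>Basis. std_normal_density (z \<bullet> b))"
proof -
  have "(\<Prod>b\<in>Basis. std_normal_density (z \<bullet> b)) = (\<Prod>b\<in>(Basis::'a set). 1 / sqrt (2 * pi)) * (\<Prod>b\<in>Basis. exp (- (z \<bullet> b)\<^sup>2 / 2))"
    unfolding std_normal_density_def prod.distrib by simp
  also have "(\<Prod>b\<in>Basis. exp (- (z \<bullet> b)\<^sup>2 / 2)) = exp (\<Sum>b\<in>Basis. - (z \<bullet> b)\<^sup>2 / 2)"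
    by (simp add: exp_sum)
  also have "(\<Sum>b\<in>Basis. - (z \<bullet> b)\<^sup>2 / 2) = - (norm z)\<^sup>2 / 2"
    by (simp add: norm_sq_basis sum_negf sum_divide_distrib)
  finally show ?thesis unfolding gauss_pdf_def gauss_const by simp
qed

lemma gauss_pdf_pos: "0 < gauss_pdf z" unfolding gauss_pdf_def by simp
lemma gauss_pdf_nonneg: "0 \<le> gauss_pdf z" using gauss_pdf_pos less_imp_le by blast
lemma gauss_pdf_meas[measurable]: "gauss_pdf \<in> borel_measurable borel"
  unfolding gauss_pdf_def by measurable

interpretation PB: product_sigma_finite "\<lambda>_. lborel :: real measure"
  by standard

lemma bsum_meas[measurable]:
  "(\<lambda>x. \<Sum>b\<in>Basis. x b *\<^sub>R b) \<in> measurable (Pi\<^sub>M (Basis::'a::euclidean_space set) (\<lambda>_. lborel)) borel"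
  by measurable

lemma integral_lborel_Pi:
  fixes g :: "'a::euclidean_space \<Rightarrow> 'b::{banach,second_countable_topology}"
  assumes [measurable]: "g \<in> borel_measurable borel"
  shows "integral\<^sup>L lborel g = (\<integral>x. g (\<Sum>b\<in>Basis. x b *\<^sub>R b) \<partial>(Pi\<^sub>M Basis (\<lambda>_. lborel)))"
  by (subst lborel_eq) (rule integral_distr; measurable)

lemma integrable_lborel_Pi:
  fixes g :: "'a::euclidean_space \<Rightarrow> 'b::{banach,second_countable_topology}"
  assumes [measurable]: "g \<in> borel_measurable borel"
  shows "integrable lborel g = integrable (Pi\<^sub>M Basis (\<lambda>_. lborel)) (\<lambda>x. g (\<Sum>b\<in>Basis. x b *\<^sub>R b))"
  by (subst lborel_eq) (rule integrable_distr_eq; measurable)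

lemma marginal:
  fixes i :: "'a::euclidean_space"
  assumes i: "i \<in> Basis" and [measurable]: "h \<in> borel_measurable borel"
    and int: "integrable lborel (\<lambda>y. std_normal_density y * h y)"
  shows "integrable lborel (\<lambda>z::'a. gauss_pdf z * h (z \<bullet> i))"
    and "(\<integral>z. gauss_pdf z * h (z \<bullet> i) \<partial>lborel) = (\<integral>y. std_normal_density y * h y \<partial>lborel)"
proof -
  define f where "f b = (if b = i then (\<lambda>y. std_normal_density y * h y) else std_normal_density)" for b :: 'a
  have eq: "gauss_pdf (\<Sum>b\<in>Basis. x b *\<^sub>R b) * h ((\<Sum>b\<in>Basis. x b *\<^sub>R b) \<bullet> i) = (\<Prod>b\<in>Basis. f b (x b))" for x
  proof -
    have "(\<Prod>b\<in>Basis. f b (x b)) = f i (x i) * (\<Prod>b\<in>Basis - {i}. f b (x b))"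
      using i by (simp add: prod.remove)
    also have "(\<Prod>b\<in>Basis - {i}. f b (x b)) = (\<Prod>b\<in>Basis - {i}. std_normal_density (x b))"
      by (rule prod.cong) (auto simp: f_def)
    also have "gauss_pdf (\<Sum>b\<in>Basis. x b *\<^sub>R b) = std_normal_density (x i) * (\<Prod>b\<in>Basis - {i}. std_normal_density (x b))"
      unfolding gauss_pdf_prod using i by (simp add: prod.remove)
    ultimately show ?thesis using i by (simp add: f_def)
  qed
  have fi: "integrable lborel (f b)" for b
    using int by (auto simp: f_def)
  have m: "(\<lambda>z::'a. gauss_pdf z * h (z \<bullet> i)) \<in> borel_measurable borel" by measurable
  show "integrable lborel (\<lambda>z::'a. gauss_pdf z * h (z \<bullet> i))"
    unfolding integrable_lborel_Pi[OF m] eq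
    by (rule PB.product_integrable_prod) (auto intro: fi)
  have "(\<integral>z. gauss_pdf z * h (z \<bullet> i) \<partial>lborel) = (\<Prod>b\<in>Basis. integral\<^sup>L lborel (f b))"
    unfolding integral_lborel_Pi[OF m] eq
    by (rule PB.product_integral_prod) (auto intro: fi)
  also have "\<dots> = integral\<^sup>L lborel (f i) * (\<Prod>b\<in>Basis - {i}. integral\<^sup>L lborel (f b))"
    using i by (simp add: prod.remove)
  also have "(\<Prod>b\<in>Basis - {i}. integral\<^sup>L lborel (f b)) = 1"
    by (rule prod.neutral) (auto simp: f_def)
  finally show "(\<integral>z. gauss_pdf z * h (z \<bullet> i) \<partial>lborel) = (\<integral>y. std_normal_density y * h y \<partial>lborel)"
    by (simp add: f_def)
qed



lemma some_basis: "(SOME i. i \<in> Basis) \<in> (Basis :: 'a::euclidean_space set)"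
  by (rule SOME_Basis)

lemma gauss_integrable: "integrable lborel (gauss_pdf :: 'a::euclidean_space \<Rightarrow> real)"
  using marginal(1)[OF some_basis, of "\<lambda>_. 1"] by simp

lemma gauss_integral: "(\<integral>z. gauss_pdf (z::'a::euclidean_space) \<partial>lborel) = 1"
  using marginal(2)[OF some_basis, of "\<lambda>_. 1"] by simp

lemma gauss_abs_integrable: "i \<in> Basis \<Longrightarrow> integrable lborel (\<lambda>z::'a::euclidean_space. gauss_pdf z * \<bar>z \<bullet> i\<bar>)"
  using marginal(1)[of i abs] integrable_N_abs by simp

lemma gauss_lin_integrable: "i \<in> Basis \<Longrightarrow> integrable lborel (\<lambda>z::'a::euclidean_space. gauss_pdf z * (z \<bullet> i))"
  using marginal(1)[of i "\<lambda>x. x"] integrable_N_x by simp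

lemma gauss_lin_integral: "i \<in> Basis \<Longrightarrow> (\<integral>z. gauss_pdf (z::'a::euclidean_space) * (z \<bullet> i) \<partial>lborel) = 0"
  using marginal(2)[of i "\<lambda>x. x"] integrable_N_x integral_N_x by simp

lemma gauss_norm_integrable: "integrable lborel (\<lambda>z::'a::euclidean_space. gauss_pdf z * norm z)"
proof (rule Bochner_Integration.integrable_bound[where f="\<lambda>z. \<Sum>b\<in>Basis. gauss_pdf z * \<bar>z \<bullet> b\<bar>"])
  show "integrable lborel (\<lambda>z::'a. \<Sum>b\<in>Basis. gauss_pdf z * \<bar>z \<bullet> b\<bar>)"
    by (intro Bochner_Integration.integrable_sum gauss_abs_integrable)
  show "AE x in lborel. norm (gauss_pdf (x::'a) * norm x) \<le> norm (\<Sum>b\<in>Basis. gauss_pdf x * \<bar>x \<bullet> b\<bar>)"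
  proof (intro always_eventually allI)
    fix x :: 'a
    have "norm (gauss_pdf x * norm x) = gauss_pdf x * norm x" using gauss_pdf_nonneg[of x] by simp
    also have "\<dots> \<le> gauss_pdf x * (\<Sum>b\<in>Basis. \<bar>x \<bullet> b\<bar>)"
      by (rule mult_left_mono[OF norm_le_l1 gauss_pdf_nonneg])
    also have "\<dots> = (\<Sum>b\<in>Basis. gauss_pdf x * \<bar>x \<bullet> b\<bar>)" by (simp add: sum_distrib_left)
    also have "\<dots> \<le> norm (\<Sum>b\<in>Basis. gauss_pdf x * \<bar>x \<bullet> b\<bar>)" by simp
    finally show "norm (gauss_pdf x * norm x) \<le> norm (\<Sum>b\<in>Basis. gauss_pdf x * \<bar>x \<bullet> b\<bar>)" .
  qed
qed simp

lemma gauss_integrable_bound: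
  fixes F :: "'a::euclidean_space \<Rightarrow> 'b::{banach,second_countable_topology}"
  assumes [measurable]: "F \<in> borel_measurable borel"
    and b: "\<And>z. norm (F z) \<le> Ca + Cb * norm z"
  shows "integrable lborel (\<lambda>z. gauss_pdf z *\<^sub>R F z)"
proof (rule Bochner_Integration.integrable_bound[where f="\<lambda>z. Ca * gauss_pdf z + Cb * (gauss_pdf z * norm z)"])
  show "integrable lborel (\<lambda>z. Ca * gauss_pdf z + Cb * (gauss_pdf z * norm z))"
    using gauss_integrable gauss_norm_integrable by (intro Bochner_Integration.integrable_add integrable_mult_right)
  show "AE x in lborel. norm (gauss_pdf x *\<^sub>R F x) \<le> norm (Ca * gauss_pdf x + Cb * (gauss_pdf x * norm x))"
  proof (intro always_eventually allI)
    fix x :: 'a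
    have "norm (gauss_pdf x *\<^sub>R F x) = gauss_pdf x * norm (F x)" using gauss_pdf_nonneg[of x] by simp
    also have "\<dots> \<le> gauss_pdf x * (Ca + Cb * norm x)"
      by (rule mult_left_mono[OF b gauss_pdf_nonneg])
    also have "\<dots> = Ca * gauss_pdf x + Cb * (gauss_pdf x * norm x)" by (simp add: algebra_simps)
    also have "\<dots> \<le> norm (Ca * gauss_pdf x + Cb * (gauss_pdf x * norm x))" by simp
    finally show "norm (gauss_pdf x *\<^sub>R F x) \<le> norm (Ca * gauss_pdf x + Cb * (gauss_pdf x * norm x))" .
  qed
qed simp

lemma split_int:
  fixes g :: "'a::euclidean_space \<Rightarrow> real"
  assumes i: "i \<in> Basis" and [measurable]: "g \<in> borel_measurable borel" and ig: "integrable lborel g"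
  shows "integral\<^sup>L lborel g = (\<integral>x. (\<integral>y. g ((\<Sum>b\<in>Basis - {i}. x b *\<^sub>R b) + y *\<^sub>R i) \<partial>lborel) \<partial>(Pi\<^sub>M (Basis - {i}) (\<lambda>_. lborel)))"
proof -
  have ins: "insert i (Basis - {i}) = Basis" using i by auto
  have ip: "integrable (Pi\<^sub>M (insert i (Basis - {i})) (\<lambda>_. lborel)) (\<lambda>x. g (\<Sum>b\<in>Basis. x b *\<^sub>R b))"
    using ig unfolding ins integrable_lborel_Pi[of g, OF \<open>g \<in> borel_measurable borel\<close>] .
  have "integral\<^sup>L lborel g = (\<integral>x. g (\<Sum>b\<in>Basis. x b *\<^sub>R b) \<partial>(Pi\<^sub>M (insert i (Basis - {i})) (\<lambda>_. lborel)))"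
    unfolding ins by (rule integral_lborel_Pi) simp
  also have "\<dots> = (\<integral>x. (\<integral>y. g (\<Sum>b\<in>Basis. (x(i:=y)) b *\<^sub>R b) \<partial>lborel) \<partial>(Pi\<^sub>M (Basis - {i}) (\<lambda>_. lborel)))"
    by (rule PB.product_integral_insert[OF _ _ ip]) auto
  also have "\<dots> = (\<integral>x. (\<integral>y. g ((\<Sum>b\<in>Basis - {i}. x b *\<^sub>R b) + y *\<^sub>R i) \<partial>lborel) \<partial>(Pi\<^sub>M (Basis - {i}) (\<lambda>_. lborel)))"
  proof (rule Bochner_Integration.integral_cong[OF refl], rule Bochner_Integration.integral_cong[OF refl])
    fix x y
    have "(\<Sum>b\<in>Basis. (x(i:=y)) b *\<^sub>R b) = (x(i:=y)) i *\<^sub>R i + (\<Sum>b\<in>Basis - {i}. (x(i:=y)) b *\<^sub>R b)"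
      using i by (simp add: sum.remove)
    also have "(\<Sum>b\<in>Basis - {i}. (x(i:=y)) b *\<^sub>R b) = (\<Sum>b\<in>Basis - {i}. x b *\<^sub>R b)"
      by (rule sum.cong) auto
    finally show "g (\<Sum>b\<in>Basis. (x(i:=y)) b *\<^sub>R b) = g ((\<Sum>b\<in>Basis - {i}. x b *\<^sub>R b) + y *\<^sub>R i)"
      by (simp add: add.commute)
  qed
  finally show ?thesis .
qed

lemma split_facts:
  fixes i :: "'a::euclidean_space" and x :: "'a \<Rightarrow> real"
  assumes i: "i \<in> Basis"
  defines "S \<equiv> (\<Sum>b\<in>Basis - {i}. x b *\<^sub>R b)"
  shows "gauss_pdf (S + y *\<^sub>R i) = (\<Prod>b\<in>Basis - {i}. std_normal_density (x b)) * std_normal_density y"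
    and "(S + y *\<^sub>R i) \<bullet> i = y"
    and "(S + y *\<^sub>R i) \<bullet> w = S \<bullet> w + (w \<bullet> i) * y"
proof -
  have Si: "S \<bullet> i = 0" unfolding S_def inner_sum_left
    by (rule sum.neutral) (auto simp: inner_not_same_Basis i)
  have Sb: "S \<bullet> b = x b" if "b \<in> Basis - {i}" for b
  proof -
    have "S \<bullet> b = (\<Sum>b'\<in>Basis - {i}. x b' * (b' \<bullet> b))" unfolding S_def inner_sum_left by simp
    also have "\<dots> = x b * (b \<bullet> b)"
      using that by (intro sum.remove[THEN trans]) (auto intro!: sum.neutral simp: inner_not_same_Basis)
    finally show ?thesis using that by simp
  qed
  show "(S + y *\<^sub>R i) \<bullet> i = y" using Si i by (simp add: inner_add_left)
  show "(S + y *\<^sub>R i) \<bullet> w = S \<bullet> w + (w \<bullet> i) * y" by (simp add: inner_add_left inner_commute[of i w])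
  have "gauss_pdf (S + y *\<^sub>R i) = std_normal_density ((S + y *\<^sub>R i) \<bullet> i) * (\<Prod>b\<in>Basis - {i}. std_normal_density ((S + y *\<^sub>R i) \<bullet> b))"
    unfolding gauss_pdf_prod using i by (simp add: prod.remove)
  also have "(\<Prod>b\<in>Basis - {i}. std_normal_density ((S + y *\<^sub>R i) \<bullet> b)) = (\<Prod>b\<in>Basis - {i}. std_normal_density (x b))"
    by (rule prod.cong) (auto simp: inner_add_left Sb inner_not_same_Basis i)
  finally show "gauss_pdf (S + y *\<^sub>R i) = (\<Prod>b\<in>Basis - {i}. std_normal_density (x b)) * std_normal_density y"
    using Si i by (simp add: inner_add_left)
qed



lemma stein_d:
  fixes w i :: "'a::euclidean_space"
  assumes i: "i \<in> Basis"
  shows "(\<integral>z. gauss_pdf z * LL (z \<bullet> w + c) * (z \<bullet> i) \<partial>lborel)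
     = - (w \<bullet> i) * (\<integral>z. gauss_pdf z * (LL (z \<bullet> w + c) * (1 - LL (z \<bullet> w + c))) \<partial>lborel)"
proof -
  define G where "G z = gauss_pdf z * LL (z \<bullet> w + c) * (z \<bullet> i)" for z
  define H where "H z = gauss_pdf z * (LL (z \<bullet> w + c) * (1 - LL (z \<bullet> w + c)))" for z
  define S where "S x = (\<Sum>b\<in>Basis - {i}. x b *\<^sub>R b)" for x :: "'a \<Rightarrow> real"
  define P where "P x = (\<Prod>b\<in>Basis - {i}. std_normal_density (x b))" for x :: "'a \<Rightarrow> real"
  define \<beta> where "\<beta> = w \<bullet> i"
  have Gm[measurable]: "G \<in> borel_measurable borel" unfolding G_def by measurable
  have Hm[measurable]: "H \<in> borel_measurable borel" unfolding H_def by measurable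
  have iG: "integrable lborel G"
  proof -
    have "integrable lborel (\<lambda>z. gauss_pdf z *\<^sub>R (LL (z \<bullet> w + c) * (z \<bullet> i)))"
    proof (rule gauss_integrable_bound[where Ca=0 and Cb=1])
      fix z :: 'a
      have "norm (LL (z \<bullet> w + c) * (z \<bullet> i)) = \<bar>LL (z \<bullet> w + c)\<bar> * \<bar>z \<bullet> i\<bar>" by (simp add: abs_mult)
      also have "\<dots> \<le> 1 * norm z" by (rule mult_mono[OF LL_abs Basis_le_norm[OF i]]) auto
      finally show "norm (LL (z \<bullet> w + c) * (z \<bullet> i)) \<le> 0 + 1 * norm z" by simp
    qed measurable
    then show ?thesis unfolding G_def by (simp add: mult.assoc)
  qed
  have iH: "integrable lborel H"
  proof -
    have "integrable lborel (\<lambda>z. gauss_pdf z *\<^sub>R (LL (z \<bullet> w + c) * (1 - LL (z \<bullet> w + c))))"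
    proof (rule gauss_integrable_bound[where Ca=1 and Cb=0])
      fix z :: 'a
      show "norm (LL (z \<bullet> w + c) * (1 - LL (z \<bullet> w + c))) \<le> 1 + 0 * norm z"
        using LL2_abs by simp
    qed measurable
    then show ?thesis unfolding H_def by simp
  qed
  have e1: "gauss_pdf (S x + y *\<^sub>R i) = P x * std_normal_density y" for x y
    unfolding S_def P_def by (rule split_facts(1)[OF i])
  have e2: "(S x + y *\<^sub>R i) \<bullet> i = y" for x y
    unfolding S_def by (rule split_facts(2)[OF i])
  have e3: "(S x + y *\<^sub>R i) \<bullet> w = S x \<bullet> w + \<beta> * y" for x y
    unfolding S_def \<beta>_def by (rule split_facts(3)[OF i])
  have innerG: "(\<integral>y. G (S x + y *\<^sub>R i) \<partial>lborel) = P x * (\<integral>y. std_normal_density y * LL ((S x \<bullet> w + c) + \<beta> * y) * y \<partial>lborel)" for x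
  proof -
    have "(\<integral>y. G (S x + y *\<^sub>R i) \<partial>lborel) = (\<integral>y. P x * (std_normal_density y * LL ((S x \<bullet> w + c) + \<beta> * y) * y) \<partial>lborel)"
      by (rule Bochner_Integration.integral_cong[OF refl])
         (simp only: G_def e1 e2 e3 ac_simps)
    then show ?thesis by simp
  qed
  have innerH: "(\<integral>y. H (S x + y *\<^sub>R i) \<partial>lborel) = P x * (\<integral>y. std_normal_density y * (LL ((S x \<bullet> w + c) + \<beta> * y) * (1 - LL ((S x \<bullet> w + c) + \<beta> * y))) \<partial>lborel)" for x
  proof -
    have "(\<integral>y. H (S x + y *\<^sub>R i) \<partial>lborel) = (\<integral>y. P x * (std_normal_density y * (LL ((S x \<bullet> w + c) + \<beta> * y) * (1 - LL ((S x \<bullet> w + c) + \<beta> * y)))) \<partial>lborel)"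
      by (rule Bochner_Integration.integral_cong[OF refl])
         (simp only: H_def e1 e2 e3 ac_simps)
    then show ?thesis by simp
  qed
  have "integral\<^sup>L lborel G = (\<integral>x. (\<integral>y. G (S x + y *\<^sub>R i) \<partial>lborel) \<partial>(Pi\<^sub>M (Basis - {i}) (\<lambda>_. lborel)))"
    unfolding S_def by (rule split_int[OF i Gm iG])
  also have "\<dots> = (\<integral>x. - \<beta> * (\<integral>y. H (S x + y *\<^sub>R i) \<partial>lborel) \<partial>(Pi\<^sub>M (Basis - {i}) (\<lambda>_. lborel)))"
    by (rule Bochner_Integration.integral_cong[OF refl]) (simp add: innerG innerH stein1)
  also have "\<dots> = - \<beta> * (\<integral>x. (\<integral>y. H (S x + y *\<^sub>R i) \<partial>lborel) \<partial>(Pi\<^sub>M (Basis - {i}) (\<lambda>_. lborel)))"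
    by simp
  also have "(\<integral>x. (\<integral>y. H (S x + y *\<^sub>R i) \<partial>lborel) \<partial>(Pi\<^sub>M (Basis - {i}) (\<lambda>_. lborel))) = integral\<^sup>L lborel H"
    unfolding S_def by (rule split_int[OF i Hm iH, symmetric])
  finally show ?thesis unfolding G_def H_def \<beta>_def .
qed



lemma stein_vec:
  fixes w :: "'a::euclidean_space"
  shows "(\<integral>z. gauss_pdf z *\<^sub>R (LL (z \<bullet> w + c) *\<^sub>R z) \<partial>lborel)
     = (- (\<integral>z. gauss_pdf z * (LL (z \<bullet> w + c) * (1 - LL (z \<bullet> w + c))) \<partial>lborel)) *\<^sub>R w"
proof (rule euclidean_eqI)
  fix i :: 'a assume i: "i \<in> Basis"
  have int: "integrable lborel (\<lambda>z. gauss_pdf z *\<^sub>R (LL (z \<bullet> w + c) *\<^sub>R z))"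
  proof (rule gauss_integrable_bound[where Ca=0 and Cb=1])
    fix z :: 'a
    have "norm (LL (z \<bullet> w + c) *\<^sub>R z) = \<bar>LL (z \<bullet> w + c)\<bar> * norm z" by simp
    also have "\<dots> \<le> 1 * norm z" by (rule mult_right_mono[OF LL_abs]) auto
    finally show "norm (LL (z \<bullet> w + c) *\<^sub>R z) \<le> 0 + 1 * norm z" by simp
  qed measurable
  have "(\<integral>z. gauss_pdf z *\<^sub>R (LL (z \<bullet> w + c) *\<^sub>R z) \<partial>lborel) \<bullet> i
      = (\<integral>z. (gauss_pdf z *\<^sub>R (LL (z \<bullet> w + c) *\<^sub>R z)) \<bullet> i \<partial>lborel)"
    by (rule integral_inner_left[symmetric], rule int)
  also have "\<dots> = (\<integral>z. gauss_pdf z * LL (z \<bullet> w + c) * (z \<bullet> i) \<partial>lborel)"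
    by (simp add: mult.assoc)
  also have "\<dots> = - (w \<bullet> i) * (\<integral>z. gauss_pdf z * (LL (z \<bullet> w + c) * (1 - LL (z \<bullet> w + c))) \<partial>lborel)"
    by (rule stein_d[OF i])
  finally show "(\<integral>z. gauss_pdf z *\<^sub>R (LL (z \<bullet> w + c) *\<^sub>R z) \<partial>lborel) \<bullet> i =
      ((- (\<integral>z. gauss_pdf z * (LL (z \<bullet> w + c) * (1 - LL (z \<bullet> w + c))) \<partial>lborel)) *\<^sub>R w) \<bullet> i"
    by simp
qed

lemma gauss_mean: "(\<integral>z. gauss_pdf z *\<^sub>R (z::'a::euclidean_space) \<partial>lborel) = 0"
proof (rule euclidean_eqI)
  fix i :: 'a assume i: "i \<in> Basis"
  have int: "integrable lborel (\<lambda>z::'a. gauss_pdf z *\<^sub>R z)"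
    by (rule gauss_integrable_bound[where Ca=0 and Cb=1]) auto
  have "(\<integral>z. gauss_pdf z *\<^sub>R z \<partial>lborel) \<bullet> i = (\<integral>z. (gauss_pdf z *\<^sub>R z) \<bullet> i \<partial>lborel)"
    by (rule integral_inner_left[symmetric], rule int)
  also have "\<dots> = (\<integral>z. gauss_pdf z * (z \<bullet> i) \<partial>lborel)" by simp
  also have "\<dots> = 0" by (rule gauss_lin_integral[OF i])
  finally show "(\<integral>z. gauss_pdf z *\<^sub>R z \<partial>lborel) \<bullet> i = 0 \<bullet> i" by simp
qed

lemma gauss_shift:
  fixes F :: "'a::euclidean_space \<Rightarrow> 'b::{banach,second_countable_topology}"
  assumes [measurable]: "F \<in> borel_measurable borel"
  shows "(\<integral>y. gauss_pdf (y - m) *\<^sub>R F y \<partial>lborel) = (\<integral>z. gauss_pdf z *\<^sub>R F (z + m) \<partial>lborel)"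
    and "integrable lborel (\<lambda>y. gauss_pdf (y - m) *\<^sub>R F y) \<longleftrightarrow> integrable lborel (\<lambda>z. gauss_pdf z *\<^sub>R F (z + m))"
proof -
  have L: "lborel = distr lborel borel ((+) m)" by (simp add: lborel_distr_plus)
  have "(\<integral>y. gauss_pdf (y - m) *\<^sub>R F y \<partial>lborel) = (\<integral>y. gauss_pdf (y - m) *\<^sub>R F y \<partial>(distr lborel borel ((+) m)))"
    by (simp only: lborel_distr_plus)
  also have "\<dots> = (\<integral>z. gauss_pdf (m + z - m) *\<^sub>R F (m + z) \<partial>lborel)"
    by (rule integral_distr) measurable
  finally show "(\<integral>y. gauss_pdf (y - m) *\<^sub>R F y \<partial>lborel) = (\<integral>z. gauss_pdf z *\<^sub>R F (z + m) \<partial>lborel)"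
    by (simp add: add.commute[of m])
  have "integrable lborel (\<lambda>y. gauss_pdf (y - m) *\<^sub>R F y) \<longleftrightarrow> integrable (distr lborel borel ((+) m)) (\<lambda>y. gauss_pdf (y - m) *\<^sub>R F y)"
    by (simp only: lborel_distr_plus)
  also have "\<dots> \<longleftrightarrow> integrable lborel (\<lambda>z. gauss_pdf (m + z - m) *\<^sub>R F (m + z))"
    by (rule integrable_distr_eq) measurable
  finally show "integrable lborel (\<lambda>y. gauss_pdf (y - m) *\<^sub>R F y) \<longleftrightarrow> integrable lborel (\<lambda>z. gauss_pdf z *\<^sub>R F (z + m))"
    by (simp add: add.commute[of m])
qed

lemma mix_expect_eq:
  fixes F :: "'a::euclidean_space \<Rightarrow> 'b::{banach,second_countable_topology}"
  assumes [measurable]: "F \<in> borel_measurable borel"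
    and b: "\<And>y. norm (F y) \<le> C * (1 + norm y)"
  shows "mix_expect m1s m2s F = (1/2) *\<^sub>R (\<integral>z. gauss_pdf z *\<^sub>R F (z + m1s) \<partial>lborel) + (1/2) *\<^sub>R (\<integral>z. gauss_pdf z *\<^sub>R F (z + m2s) \<partial>lborel)"
proof -
  have C: "0 \<le> C" proof -
    have "norm (F 0) \<le> C" using b[of 0] by simp
    then show ?thesis using norm_ge_zero[of "F 0"] by linarith
  qed
  have ii: "integrable lborel (\<lambda>y. gauss_pdf (y - m) *\<^sub>R F y)" for m
    unfolding gauss_shift(2)[OF \<open>F \<in> _\<close>]
  proof (rule gauss_integrable_bound[where Ca="C * (1 + norm m)" and Cb=C])
    fix z :: 'a
    have "norm (F (z + m)) \<le> C * (1 + norm (z + m))" by (rule b)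
    also have "\<dots> \<le> C * (1 + (norm z + norm m))" by (intro mult_left_mono C) (simp add: norm_triangle_ineq)
    finally show "norm (F (z + m)) \<le> C * (1 + norm m) + C * norm z" by (simp add: algebra_simps)
  qed measurable
  have h2: "(gauss_pdf u / 2) *\<^sub>R v = (1/2) *\<^sub>R (gauss_pdf u *\<^sub>R v)" for u :: 'a and v :: 'b
  proof -
    have "gauss_pdf u / 2 = (1/2) * gauss_pdf u" by simp
    then show ?thesis by (simp only: scaleR_scaleR)
  qed
  have "mix_expect m1s m2s F = (\<integral>y. (1/2) *\<^sub>R (gauss_pdf (y - m1s) *\<^sub>R F y) + (1/2) *\<^sub>R (gauss_pdf (y - m2s) *\<^sub>R F y) \<partial>lborel)"
    unfolding mix_expect_def mix_pdf_def scaleR_add_left h2 ..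
  also have "\<dots> = (\<integral>y. (1/2) *\<^sub>R (gauss_pdf (y - m1s) *\<^sub>R F y) \<partial>lborel) + (\<integral>y. (1/2) *\<^sub>R (gauss_pdf (y - m2s) *\<^sub>R F y) \<partial>lborel)"
    by (rule Bochner_Integration.integral_add; rule integrable_scaleR_right; rule ii)
  also have "\<dots> = (1/2) *\<^sub>R (\<integral>y. gauss_pdf (y - m1s) *\<^sub>R F y \<partial>lborel) + (1/2) *\<^sub>R (\<integral>y. gauss_pdf (y - m2s) *\<^sub>R F y \<partial>lborel)"
    by (simp only: integral_scaleR_right)
  finally show ?thesis by (simp only: gauss_shift(1)[OF \<open>F \<in> _\<close>])
qed



lemma not_AE_False_lborel: "\<not> (AE x in (lborel :: 'a::euclidean_space measure). False)"
proof
  assume "AE x in (lborel :: 'a measure). False"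
  then have "AE x in (lborel :: 'a measure). x \<notin> UNIV" by simp
  then have "UNIV \<in> null_sets (lborel :: 'a measure)"
    by (subst AE_iff_null_sets) auto
  then show False using null_setsD1 by fastforce
qed

lemma gauss_int_pos:
  fixes f :: "'a::euclidean_space \<Rightarrow> real"
  assumes i: "integrable lborel (\<lambda>z. gauss_pdf z * f z)" and pos: "\<And>z. 0 < f z"
  shows "0 < (\<integral>z. gauss_pdf z * f z \<partial>lborel)"
proof -
  have nn: "AE z in lborel. 0 \<le> gauss_pdf z * f z"
    by (intro always_eventually allI mult_nonneg_nonneg gauss_pdf_nonneg less_imp_le[OF pos])
  have "(\<integral>z. gauss_pdf z * f z \<partial>lborel) \<noteq> 0"
  proof
    assume "(\<integral>z. gauss_pdf z * f z \<partial>lborel) = 0"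
    then have "AE z in lborel. gauss_pdf z * f z = 0"
      using integral_nonneg_eq_0_iff_AE[OF i nn] by simp
    moreover have "gauss_pdf z * f z \<noteq> 0" for z using pos[of z] gauss_pdf_pos[of z] by simp
    ultimately have "AE z in (lborel :: 'a measure). False" by simp
    then show False using not_AE_False_lborel by blast
  qed
  moreover have "0 \<le> (\<integral>z. gauss_pdf z * f z \<partial>lborel)" by (rule integral_nonneg_AE[OF nn])
  ultimately show ?thesis by simp
qed

lemma gauss_int_bounded:
  fixes f :: "'a::euclidean_space \<Rightarrow> real"
  assumes [measurable]: "f \<in> borel_measurable borel" and b: "\<And>z. \<bar>f z\<bar> \<le> C"
  shows "integrable lborel (\<lambda>z. gauss_pdf z * f z)"
  using gauss_integrable_bound[where F=f and Ca=C and Cb=0] b by simp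

lemma v_d_eq:
  fixes y m b :: "'a::euclidean_space"
  shows "v_d y (m - b) (m + b) = LL (2 * ((y - m) \<bullet> b))"
proof -
  define x where "x = y - m"
  have y1: "y - (m - b) = x + b" and y2: "y - (m + b) = x - b" by (simp_all add: x_def algebra_simps)
  define K where "K = (2 * pi) powr (- real DIM('a) / 2)"
  have K: "0 < K" unfolding K_def by simp
  have n1: "(norm (x + b))\<^sup>2 = (norm x)\<^sup>2 + 2 * (x \<bullet> b) + (norm b)\<^sup>2"
    by (simp add: power2_norm_eq_inner inner_add_left inner_add_right inner_commute)
  have n2: "(norm (x - b))\<^sup>2 = (norm x)\<^sup>2 - 2 * (x \<bullet> b) + (norm b)\<^sup>2"
    by (simp add: power2_norm_eq_inner inner_diff_left inner_diff_right inner_commute)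
  define A where "A = - ((norm x)\<^sup>2 + (norm b)\<^sup>2) / 2"
  define c where "c = K * exp A"
  have c: "c \<noteq> 0" using K unfolding c_def by simp
  have g1: "gauss_pdf (x + b) = K * exp A * exp (- (x \<bullet> b))"
    unfolding gauss_pdf_def K_def[symmetric] n1 A_def mult.assoc exp_add[symmetric]
    by (simp add: field_simps)
  have g2: "gauss_pdf (x - b) = K * exp A * exp (x \<bullet> b)"
    unfolding gauss_pdf_def K_def[symmetric] n2 A_def mult.assoc exp_add[symmetric]
    by (simp add: field_simps)
  have "v_d y (m - b) (m + b) = exp (- (x \<bullet> b)) / (exp (- (x \<bullet> b)) + exp (x \<bullet> b))"
    unfolding v_d_def y1 y2 g1 g2 c_def[symmetric] distrib_left[symmetric]
    using c by (rule mult_divide_mult_cancel_left)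
  also have "\<dots> = 1 / (1 + exp (2 * (x \<bullet> b)))"
  proof -
    have "exp (x \<bullet> b) = exp (- (x \<bullet> b)) * exp (2 * (x \<bullet> b))"
      by (simp add: exp_add[symmetric])
    then have "exp (- (x \<bullet> b)) + exp (x \<bullet> b) = exp (- (x \<bullet> b)) * (1 + exp (2 * (x \<bullet> b)))"
      by (simp only: distrib_left mult_1_right)
    then have "exp (- (x \<bullet> b)) / (exp (- (x \<bullet> b)) + exp (x \<bullet> b)) = (exp (- (x \<bullet> b)) * 1) / (exp (- (x \<bullet> b)) * (1 + exp (2 * (x \<bullet> b))))"
      by simp
    also have "\<dots> = 1 / (1 + exp (2 * (x \<bullet> b)))"
      by (rule mult_divide_mult_cancel_left) simp
    finally show ?thesis .
  qed
  finally show ?thesis unfolding LL_def x_def .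
qed



lemma LL_meas2[measurable]: "(\<lambda>z. LL (f z)) \<in> borel_measurable M" if [measurable]: "f \<in> borel_measurable M"
  by measurable

lemma half_sum: "(1/2) *\<^sub>R x + (1/2) *\<^sub>R x = (x::'a::real_vector)"
  by (simp flip: scaleR_add_left)

lemma step_formula:
  fixes m1s m2s \<nu> \<omega> :: "'a::euclidean_space"
  assumes c_def: "c = (m1s + m2s) /\<^sub>R 2" and \<theta>_def: "\<theta> = (m2s - m1s) /\<^sub>R 2"
    and m_def: "m = (\<nu> + \<omega>) /\<^sub>R 2" and b_def: "b = (\<omega> - \<nu>) /\<^sub>R 2"
    and \<kappa>_def: "\<kappa> = (m - c) \<bullet> b"
    and s_def: "s = (\<lambda>z. LL (z \<bullet> (2 *\<^sub>R b) + (- 2 * \<kappa>)))"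
    and p_def: "p = (\<integral>z. gauss_pdf z * s z \<partial>lborel)"
    and q_def: "q = (\<integral>z. gauss_pdf z * (s z * (1 - s z)) \<partial>lborel)"
  assumes orth: "b \<bullet> \<theta> = 0"
  shows "em_step m1s m2s (\<nu>, \<omega>) = (c - (2 * q / p) *\<^sub>R b, c + (2 * q / (1 - p)) *\<^sub>R b)"
    and "0 < p" and "p < 1"
proof -
  have mu1: "\<nu> = m - b" and mu2: "\<omega> = m + b"
    unfolding m_def b_def by (rule euclidean_eqI, simp add: inner_diff_left inner_add_left field_simps)+
  have m1s: "m1s = c - \<theta>" and m2s: "m2s = c + \<theta>"
    unfolding c_def \<theta>_def
    by (rule euclidean_eqI, simp add: inner_diff_left inner_add_left field_simps)+
  have vfun: "v_d y \<nu> \<omega> = LL (2 * ((y - m) \<bullet> b))" for y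
    unfolding mu1 mu2 by (rule v_d_eq)
  have sv1: "v_d (z + m1s) \<nu> \<omega> = s z" for z
  proof -
    have "2 * ((z + m1s - m) \<bullet> b) = z \<bullet> (2 *\<^sub>R b) + (- 2 * \<kappa>)"
      unfolding m1s \<kappa>_def using orth by (simp add: inner_add_left inner_diff_left inner_commute[of \<theta> b] algebra_simps)
    then show ?thesis unfolding vfun s_def by simp
  qed
  have sv2: "v_d (z + m2s) \<nu> \<omega> = s z" for z
  proof -
    have "2 * ((z + m2s - m) \<bullet> b) = z \<bullet> (2 *\<^sub>R b) + (- 2 * \<kappa>)"
      unfolding m2s \<kappa>_def using orth by (simp add: inner_add_left inner_diff_left inner_commute[of \<theta> b] algebra_simps)
    then show ?thesis unfolding vfun s_def by simp
  qed
  have s01: "0 < s z" "s z < 1" for z unfolding s_def by (rule LL_pos, rule LL_lt1)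
  have sm[measurable]: "s \<in> borel_measurable borel" unfolding s_def by measurable
  have vm[measurable]: "(\<lambda>y. v_d y \<nu> \<omega>) \<in> borel_measurable borel" unfolding vfun by measurable
  have v01: "0 < v_d y \<nu> \<omega>" "v_d y \<nu> \<omega> < 1" for y unfolding vfun by (rule LL_pos, rule LL_lt1)
  have is1: "integrable lborel (\<lambda>z. gauss_pdf z * s z)"
    by (rule gauss_int_bounded[where C=1]) (use s01 in \<open>auto simp: abs_le_iff less_imp_le\<close>)
  have is2: "integrable lborel (\<lambda>z. gauss_pdf z * (1 - s z))"
    by (rule gauss_int_bounded[where C=1]) (use s01 in \<open>auto simp: abs_le_iff less_imp_le\<close>)
  have isv: "integrable lborel (\<lambda>z. gauss_pdf z *\<^sub>R (s z *\<^sub>R z))"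
  proof (rule gauss_integrable_bound[where Ca=0 and Cb=1])
    fix z :: 'a
    have "norm (s z *\<^sub>R z) = \<bar>s z\<bar> * norm z" by simp
    also have "\<dots> \<le> 1 * norm z" by (rule mult_right_mono) (use s01[of z] in auto)
    finally show "norm (s z *\<^sub>R z) \<le> 0 + 1 * norm z" by simp
  qed measurable
  have iz: "integrable lborel (\<lambda>z::'a. gauss_pdf z *\<^sub>R z)"
    by (rule gauss_integrable_bound[where Ca=0 and Cb=1]) auto
  show ppos: "0 < p" unfolding p_def by (rule gauss_int_pos[OF is1 s01(1)])
  have p1: "(\<integral>z. gauss_pdf z * (1 - s z) \<partial>lborel) = 1 - p"
  proof -
    have "(\<integral>z. gauss_pdf z * (1 - s z) \<partial>lborel) = (\<integral>z. gauss_pdf z - gauss_pdf z * s z \<partial>lborel)"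
      by (simp add: algebra_simps)
    also have "\<dots> = (\<integral>z. gauss_pdf (z::'a) \<partial>lborel) - p"
      unfolding p_def using Bochner_Integration.integral_diff[OF gauss_integrable is1] by simp
    finally show ?thesis by (simp add: gauss_integral)
  qed
  have "0 < (\<integral>z. gauss_pdf z * (1 - s z) \<partial>lborel)"
    by (rule gauss_int_pos[OF is2]) (use s01 in auto)
  then show plt1: "p < 1" using p1 by simp
  define Gv where "Gv = (\<integral>z. gauss_pdf z *\<^sub>R (s z *\<^sub>R z) \<partial>lborel)"
  have Gv: "Gv = (- (2 * q)) *\<^sub>R b"
    unfolding Gv_def s_def q_def stein_vec by simp
  have hv1: "(\<integral>z. gauss_pdf z *\<^sub>R (s z *\<^sub>R (z + m0)) \<partial>lborel) = Gv + p *\<^sub>R m0" for m0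
  proof -
    have "(\<integral>z. gauss_pdf z *\<^sub>R (s z *\<^sub>R (z + m0)) \<partial>lborel) = (\<integral>z. gauss_pdf z *\<^sub>R (s z *\<^sub>R z) + (gauss_pdf z * s z) *\<^sub>R m0 \<partial>lborel)"
      by (rule Bochner_Integration.integral_cong[OF refl]) (simp add: scaleR_add_right)
    also have "\<dots> = Gv + (\<integral>z. (gauss_pdf z * s z) *\<^sub>R m0 \<partial>lborel)"
      unfolding Gv_def by (rule Bochner_Integration.integral_add[OF isv]) (use is1 in simp)
    also have "(\<integral>z. (gauss_pdf z * s z) *\<^sub>R m0 \<partial>lborel) = p *\<^sub>R m0"
      unfolding p_def using is1 by simp
    finally show ?thesis .
  qed
  have hv2: "(\<integral>z. gauss_pdf z *\<^sub>R ((1 - s z) *\<^sub>R (z + m0)) \<partial>lborel) = m0 - Gv - p *\<^sub>R m0" for m0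
  proof -
    have isv2: "integrable lborel (\<lambda>z. gauss_pdf z *\<^sub>R (s z *\<^sub>R (z + m0)))"
      using isv is1 by (simp add: scaleR_add_right)
    have im0: "integrable lborel (\<lambda>z::'a. gauss_pdf z *\<^sub>R m0)" by (rule integrable_scaleR_left) (rule gauss_integrable)
    have g0: "(\<integral>z. gauss_pdf z *\<^sub>R (z::'a) \<partial>lborel) = 0" by (rule gauss_mean)
    have g1: "(\<integral>z. gauss_pdf (z::'a) *\<^sub>R m0 \<partial>lborel) = m0"
      by (subst integral_scaleR_left) (simp_all add: gauss_integrable gauss_integral)
    have "(\<integral>z. gauss_pdf z *\<^sub>R ((1 - s z) *\<^sub>R (z + m0)) \<partial>lborel)
        = (\<integral>z. (gauss_pdf z *\<^sub>R z + gauss_pdf z *\<^sub>R m0) - gauss_pdf z *\<^sub>R (s z *\<^sub>R (z + m0)) \<partial>lborel)"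
      by (rule Bochner_Integration.integral_cong[OF refl], rule euclidean_eqI) (simp add: inner_diff_left inner_add_left field_simps)
    also have "\<dots> = (\<integral>z. gauss_pdf z *\<^sub>R z + gauss_pdf z *\<^sub>R m0 \<partial>lborel) - (Gv + p *\<^sub>R m0)"
      unfolding hv1[symmetric] by (rule Bochner_Integration.integral_diff[OF Bochner_Integration.integrable_add[OF iz im0] isv2])
    also have "(\<integral>z. gauss_pdf z *\<^sub>R z + gauss_pdf z *\<^sub>R m0 \<partial>lborel) = 0 + m0"
      using Bochner_Integration.integral_add[OF iz im0] g0 g1 by simp
    finally show ?thesis by simp
  qed
  have bnd: "norm (v_d y \<nu> \<omega>) \<le> 1 * (1 + norm y)" "norm (1 - v_d y \<nu> \<omega>) \<le> 1 * (1 + norm y)"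
    "norm (v_d y \<nu> \<omega> *\<^sub>R y) \<le> 1 * (1 + norm y)" "norm ((1 - v_d y \<nu> \<omega>) *\<^sub>R y) \<le> 1 * (1 + norm y)" for y
  proof -
    have a: "\<bar>v_d y \<nu> \<omega>\<bar> \<le> 1" "\<bar>1 - v_d y \<nu> \<omega>\<bar> \<le> 1" using v01[of y] by auto
    have o: "1 \<le> 1 * (1 + norm y)" by simp
    show "norm (v_d y \<nu> \<omega>) \<le> 1 * (1 + norm y)" "norm (1 - v_d y \<nu> \<omega>) \<le> 1 * (1 + norm y)"
      using a order_trans[OF _ o] by auto
    have "norm (v_d y \<nu> \<omega> *\<^sub>R y) \<le> 1 * norm y" unfolding norm_scaleR by (rule mult_right_mono[OF a(1)]) simp
    then show "norm (v_d y \<nu> \<omega> *\<^sub>R y) \<le> 1 * (1 + norm y)" by simp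
    have "norm ((1 - v_d y \<nu> \<omega>) *\<^sub>R y) \<le> 1 * norm y" unfolding norm_scaleR by (rule mult_right_mono[OF a(2)]) simp
    then show "norm ((1 - v_d y \<nu> \<omega>) *\<^sub>R y) \<le> 1 * (1 + norm y)" by simp
  qed
  have E1: "mix_expect m1s m2s (\<lambda>y. v_d y \<nu> \<omega>) = p"
    by (subst mix_expect_eq[OF _ bnd(1)]) (simp_all add: sv1 sv2 p_def)
  have E2: "mix_expect m1s m2s (\<lambda>y. 1 - v_d y \<nu> \<omega>) = 1 - p"
    by (subst mix_expect_eq[OF _ bnd(2)]) (simp_all add: sv1 sv2 p1)
  have E3: "mix_expect m1s m2s (\<lambda>y. v_d y \<nu> \<omega> *\<^sub>R y) = Gv + p *\<^sub>R c"
  proof -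
    have "mix_expect m1s m2s (\<lambda>y. v_d y \<nu> \<omega> *\<^sub>R y) = (1/2) *\<^sub>R (Gv + p *\<^sub>R m1s) + (1/2) *\<^sub>R (Gv + p *\<^sub>R m2s)"
      by (subst mix_expect_eq[OF _ bnd(3)], measurable, simp only: sv1 sv2 hv1)
    also have "\<dots> = Gv + p *\<^sub>R c" unfolding c_def by (simp add: scaleR_add_right half_sum)
    finally show ?thesis .
  qed
  have E4: "mix_expect m1s m2s (\<lambda>y. (1 - v_d y \<nu> \<omega>) *\<^sub>R y) = c - Gv - p *\<^sub>R c"
  proof -
    have "mix_expect m1s m2s (\<lambda>y. (1 - v_d y \<nu> \<omega>) *\<^sub>R y) = (1/2) *\<^sub>R (m1s - Gv - p *\<^sub>R m1s) + (1/2) *\<^sub>R (m2s - Gv - p *\<^sub>R m2s)"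
      by (subst mix_expect_eq[OF _ bnd(4)], measurable, simp only: sv1 sv2 hv2)
    also have "\<dots> = c - Gv - p *\<^sub>R c" unfolding c_def
      using half_sum[of Gv] by (simp add: scaleR_add_right scaleR_diff_right algebra_simps)
    finally show ?thesis .
  qed
  have pn: "p \<noteq> 0" "1 - p \<noteq> 0" using ppos plt1 by auto
  have r1: "(1 / p) *\<^sub>R (Gv + p *\<^sub>R c) = c - (2 * q / p) *\<^sub>R b"
    unfolding Gv using pn by (simp add: scaleR_add_right scaleR_diff_right)
  have r2: "(1 / (1 - p)) *\<^sub>R (c - Gv - p *\<^sub>R c) = c + (2 * q / (1 - p)) *\<^sub>R b"
  proof -
    have o: "1 / (1 - p) - p / (1 - p) = 1" using pn by (simp add: diff_divide_distrib[symmetric])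
    have e: "(1 / (1 - p)) *\<^sub>R c - (p / (1 - p)) *\<^sub>R c = c"
      by (simp only: scaleR_diff_left[symmetric] o scaleR_one)
    show ?thesis unfolding Gv using e by (simp add: scaleR_add_right scaleR_diff_right algebra_simps)
  qed
  show "em_step m1s m2s (\<nu>, \<omega>) = (c - (2 * q / p) *\<^sub>R b, c + (2 * q / (1 - p)) *\<^sub>R b)"
    unfolding em_step_def using E1 E2 E3 E4 r1 r2 by simp
qed



lemma var_identity:
  fixes s :: "'a::euclidean_space \<Rightarrow> real"
  assumes [measurable]: "s \<in> borel_measurable borel" and s01: "\<And>z. 0 \<le> s z" "\<And>z. s z \<le> 1"
    and p_def: "p = (\<integral>z. gauss_pdf z * s z \<partial>lborel)"
    and q_def: "q = (\<integral>z. gauss_pdf z * (s z * (1 - s z)) \<partial>lborel)"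
  shows "q = p * (1 - p) - (\<integral>z. gauss_pdf z * (s z - p)\<^sup>2 \<partial>lborel)"
    and "0 \<le> (\<integral>z. gauss_pdf z * (s z - p)\<^sup>2 \<partial>lborel)"
    and "0 \<le> q"
proof -
  have i1: "integrable lborel (\<lambda>z. gauss_pdf z * s z)"
    by (rule gauss_int_bounded[where C=1]) (use s01 in auto)
  have i2: "integrable lborel (\<lambda>z. gauss_pdf z * (s z)\<^sup>2)"
  proof (rule gauss_int_bounded[where C=1])
    fix z show "\<bar>(s z)\<^sup>2\<bar> \<le> 1" using s01[of z] by (simp add: power_le_one)
  qed measurable
  have ig: "integrable lborel (gauss_pdf :: 'a \<Rightarrow> real)" by (rule gauss_integrable)
  define E2 where "E2 = (\<integral>z. gauss_pdf z * (s z)\<^sup>2 \<partial>lborel)"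
  have V: "(\<integral>z. gauss_pdf z * (s z - p)\<^sup>2 \<partial>lborel) = E2 - p\<^sup>2"
  proof -
    have "(\<lambda>z. gauss_pdf z * (s z - p)\<^sup>2) = (\<lambda>z. (gauss_pdf z * (s z)\<^sup>2 - (2 * p) * (gauss_pdf z * s z)) + p\<^sup>2 * gauss_pdf z)"
      by (rule ext) (simp add: power2_eq_square algebra_simps)
    then have "(\<integral>z. gauss_pdf z * (s z - p)\<^sup>2 \<partial>lborel) = (\<integral>z. (gauss_pdf z * (s z)\<^sup>2 - (2 * p) * (gauss_pdf z * s z)) + p\<^sup>2 * gauss_pdf z \<partial>lborel)"
      by simp
    also have "\<dots> = (\<integral>z. gauss_pdf z * (s z)\<^sup>2 - (2 * p) * (gauss_pdf z * s z) \<partial>lborel) + (\<integral>z. p\<^sup>2 * gauss_pdf (z::'a) \<partial>lborel)"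
      by (rule Bochner_Integration.integral_add) (use i1 i2 ig in auto)
    also have "(\<integral>z. gauss_pdf z * (s z)\<^sup>2 - (2 * p) * (gauss_pdf z * s z) \<partial>lborel) = E2 - (2 * p) * p"
      unfolding E2_def p_def using i1 i2 by simp
    also have "(\<integral>z. p\<^sup>2 * gauss_pdf (z::'a) \<partial>lborel) = p\<^sup>2" using gauss_integral[where 'a='a] by simp
    finally show ?thesis by (simp add: power2_eq_square)
  qed
  have Q: "q = p - E2"
  proof -
    have "(\<lambda>z. gauss_pdf z * (s z * (1 - s z))) = (\<lambda>z. gauss_pdf z * s z - gauss_pdf z * (s z)\<^sup>2)"
      by (rule ext) (simp add: power2_eq_square algebra_simps)
    then show ?thesis unfolding q_def E2_def p_def using i1 i2 by simp
  qed
  show "q = p * (1 - p) - (\<integral>z. gauss_pdf z * (s z - p)\<^sup>2 \<partial>lborel)" unfolding V Q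
    by (simp add: power2_eq_square algebra_simps)
  show "0 \<le> (\<integral>z. gauss_pdf z * (s z - p)\<^sup>2 \<partial>lborel)"
    by (rule integral_nonneg_AE) (simp add: gauss_pdf_nonneg)
  show "0 \<le> q" unfolding q_def
    by (rule integral_nonneg_AE) (use s01 in \<open>simp add: gauss_pdf_nonneg\<close>)
qed



lemma LL_neg: "LL (- x) = 1 - LL x"
proof -
  have ne: "1 + exp x \<noteq> 0" by (smt (verit) exp_gt_zero)
  have "LL (- x) = exp x / (exp x + 1)" unfolding LL_def
    by (simp add: exp_minus field_simps)
  also have "\<dots> = 1 - LL x" unfolding LL_def using ne by (simp add: field_simps)
  finally show ?thesis .
qed

lemma LL_mono: "x \<le> y \<Longrightarrow> LL y \<le> LL x"
  unfolding LL_def by (simp add: frac_le add_pos_pos)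

lemma LL_half: "0 < e \<Longrightarrow> 1/2 < LL (- e)"
proof -
  assume "0 < e"
  then have "exp (- e) < 1" by simp
  then show ?thesis unfolding LL_def by (simp add: field_simps add_pos_pos)
qed

lemma measure_cball_lborel: "0 \<le> r \<Longrightarrow> measure lborel (cball (c::'a::euclidean_space) r) = unit_ball_vol (DIM('a)) * r ^ DIM('a)"
  unfolding measure_def emeasure_cball by simp

lemma var_lower:
  fixes b :: "'a::euclidean_space"
  assumes eps: "0 < \<epsilon>" "\<epsilon> \<le> norm b" and kap: "\<bar>\<kappa>\<bar> \<le> M * norm b"
    and s_def: "s = (\<lambda>z. LL (z \<bullet> (2 *\<^sub>R b) + (- 2 * \<kappa>)))"
    and p_def: "p = (\<integral>z. gauss_pdf z * s z \<partial>lborel)"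
  shows "(2 * pi) powr (- real DIM('a) / 2) * exp (- (M + 2)\<^sup>2 / 2) * (LL (- 2 * \<epsilon>) - 1/2)\<^sup>2
           * (unit_ball_vol (DIM('a)) * (1/2) ^ DIM('a)) \<le> (\<integral>z. gauss_pdf z * (s z - p)\<^sup>2 \<partial>lborel)"
proof -
  define \<beta> where "\<beta> = norm b"
  have \<beta>: "0 < \<beta>" using eps unfolding \<beta>_def by linarith
  define u where "u = b /\<^sub>R \<beta>"
  have nu: "norm u = 1" unfolding u_def \<beta>_def using \<beta>[unfolded \<beta>_def] by simp
  have bu: "b = \<beta> *\<^sub>R u" unfolding u_def using \<beta> by simp
  define t0 where "t0 = \<kappa> / \<beta>"
  have t0: "\<bar>t0\<bar> \<le> M" unfolding t0_def using kap \<beta> unfolding \<beta>_def[symmetric]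
    by (simp add: abs_div divide_le_eq)
  have M0: "0 \<le> M" using t0 by simp
  have seq: "s z = LL (2 * \<beta> * (z \<bullet> u - t0))" for z
    unfolding s_def bu t0_def using \<beta> by (simp add: algebra_simps)
  define \<delta> where "\<delta> = LL (- 2 * \<epsilon>) - 1/2"
  have \<delta>: "0 < \<delta>" unfolding \<delta>_def using LL_half[of "2 * \<epsilon>"] eps by simp
  define K where "K = (2 * pi) powr (- real DIM('a) / 2) * exp (- (M + 2)\<^sup>2 / 2)"
  have K: "0 \<le> K" unfolding K_def by simp
  obtain cc where cc: "\<And>z. z \<in> cball cc (1/2) \<Longrightarrow> \<delta>\<^sup>2 \<le> (s z - p)\<^sup>2 \<and> norm z \<le> M + 2"
  proof -
    define \<sigma> :: real where "\<sigma> = (if p \<le> 1/2 then -1 else 1)"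
    define cc where "cc = (t0 + \<sigma> * (3/2)) *\<^sub>R u"
    have \<sigma>: "\<bar>\<sigma>\<bar> = 1" unfolding \<sigma>_def by simp
    have "\<delta>\<^sup>2 \<le> (s z - p)\<^sup>2 \<and> norm z \<le> M + 2" if z: "z \<in> cball cc (1/2)" for z
    proof -
      have dz: "norm (z - cc) \<le> 1/2" using z by (simp add: dist_norm norm_minus_commute)
      have "\<bar>(z - cc) \<bullet> u\<bar> \<le> norm (z - cc) * norm u" by (rule Cauchy_Schwarz_ineq2)
      then have zu: "\<bar>z \<bullet> u - (t0 + \<sigma> * (3/2))\<bar> \<le> 1/2"
        using dz nu unfolding cc_def by (simp add: inner_diff_left power2_norm_eq_inner[symmetric])
      have "norm z \<le> norm cc + norm (z - cc)" using norm_triangle_ineq[of cc "z - cc"] by simp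
      also have "norm cc = \<bar>t0 + \<sigma> * (3/2)\<bar>" unfolding cc_def using nu by simp
      also have "\<bar>t0 + \<sigma> * (3/2)\<bar> \<le> M + 3/2" using t0 \<sigma> by (simp add: abs_le_iff) linarith
      finally have nz: "norm z \<le> M + 2" using dz by linarith
      have "\<delta> \<le> \<bar>s z - p\<bar>"
      proof (cases "p \<le> 1/2")
        case True
        then have "\<sigma> = -1" unfolding \<sigma>_def by simp
        then have "z \<bullet> u - t0 \<le> -1" using abs_le_D1[OF zu] by simp
        then have "\<beta> * (z \<bullet> u - t0) \<le> \<beta> * (-1)" using \<beta> by (intro mult_left_mono) auto
        then have "2 * \<beta> * (z \<bullet> u - t0) \<le> - 2 * \<epsilon>"
          using eps unfolding \<beta>_def[symmetric] by linarith
        then have "LL (- 2 * \<epsilon>) \<le> s z" unfolding seq by (rule LL_mono)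
        then show ?thesis using True unfolding \<delta>_def by simp
      next
        case False
        then have "\<sigma> = 1" unfolding \<sigma>_def by simp
        then have "1 \<le> z \<bullet> u - t0" using abs_le_D2[OF zu] by simp
        then have "\<beta> * 1 \<le> \<beta> * (z \<bullet> u - t0)" using \<beta> by (intro mult_left_mono) auto
        then have "2 * \<epsilon> \<le> 2 * \<beta> * (z \<bullet> u - t0)"
          using eps unfolding \<beta>_def[symmetric] by linarith
        then have "s z \<le> LL (2 * \<epsilon>)" unfolding seq by (rule LL_mono)
        also have "LL (2 * \<epsilon>) = 1 - LL (- 2 * \<epsilon>)" using LL_neg[of "2 * \<epsilon>"] by simp
        finally show ?thesis using False unfolding \<delta>_def by simp
      qed
      then have "\<delta>\<^sup>2 \<le> (s z - p)\<^sup>2" using \<delta>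
      proof -
        have "\<delta>\<^sup>2 \<le> \<bar>s z - p\<bar>\<^sup>2" by (rule power_mono) (use \<open>\<delta> \<le> \<bar>s z - p\<bar>\<close> \<delta> in auto)
        then show ?thesis by simp
      qed
      then show ?thesis using nz by simp
    qed
    then show thesis using that by blast
  qed
  have sm[measurable]: "s \<in> borel_measurable borel" unfolding s_def by measurable
  have i1: "integrable lborel (\<lambda>z. gauss_pdf z * (s z - p)\<^sup>2)"
  proof (rule gauss_int_bounded[where C="(1 + \<bar>p\<bar>)\<^sup>2"])
    fix z
    have "\<bar>s z - p\<bar> \<le> 1 + \<bar>p\<bar>"
    proof -
      have "0 < s z" "s z < 1" unfolding s_def by (rule LL_pos, rule LL_lt1)
      then show ?thesis by (simp add: abs_le_iff) linarith
    qed
    then have "\<bar>s z - p\<bar>\<^sup>2 \<le> (1 + \<bar>p\<bar>)\<^sup>2" by (rule power_mono) simp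
    then show "\<bar>(s z - p)\<^sup>2\<bar> \<le> (1 + \<bar>p\<bar>)\<^sup>2" by simp
  qed measurable
  have i2: "integrable lborel (\<lambda>z. (K * \<delta>\<^sup>2) * indicator (cball cc (1/2)) z)"
    by (intro integrable_mult_right integrable_real_indicator) (use emeasure_lborel_cball_finite[of cc "1/2", unfolded infinity_ennreal_def] in simp_all)
  have le: "(K * \<delta>\<^sup>2) * indicator (cball cc (1/2)) z \<le> gauss_pdf z * (s z - p)\<^sup>2" for z
  proof (cases "z \<in> cball cc (1/2)")
    case True
    with cc have h: "\<delta>\<^sup>2 \<le> (s z - p)\<^sup>2" "norm z \<le> M + 2" by auto
    have "K \<le> gauss_pdf z"
    proof -
      have "(norm z)\<^sup>2 \<le> (M + 2)\<^sup>2" using h(2) by (simp add: power_mono)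
      then have "exp (- (M + 2)\<^sup>2 / 2) \<le> exp (- (norm z)\<^sup>2 / 2)" by simp
      then show ?thesis unfolding K_def gauss_pdf_def by (rule mult_left_mono) simp
    qed
    then show ?thesis using True h K by (simp add: mult_mono)
  next
    case False
    then show ?thesis by (simp add: gauss_pdf_nonneg)
  qed
  have "(\<integral>z. (K * \<delta>\<^sup>2) * indicator (cball cc (1/2)) z \<partial>lborel) \<le> (\<integral>z. gauss_pdf z * (s z - p)\<^sup>2 \<partial>lborel)"
    by (rule integral_mono[OF i2 i1 le])
  moreover have "(\<integral>z. (K * \<delta>\<^sup>2) * indicator (cball cc (1/2)) z \<partial>lborel) = K * \<delta>\<^sup>2 * (unit_ball_vol (DIM('a)) * (1/2) ^ DIM('a))"
  proof -
    have "(\<integral>z. (K * \<delta>\<^sup>2) * indicator (cball cc (1/2)) z \<partial>lborel) = (K * \<delta>\<^sup>2) * (\<integral>z. indicator (cball cc (1/2)) z \<partial>lborel)"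
      by (rule Bochner_Integration.integral_mult_right_zero)
    also have "(\<integral>z. indicator (cball cc (1/2)) z \<partial>lborel) = measure lborel (cball cc (1/2))"
      using Bochner_Integration.integral_indicator[of lborel "cball cc (1/2)"] by simp
    also have "\<dots> = unit_ball_vol (DIM('a)) * (1/2) ^ DIM('a)" by (rule measure_cball_lborel) simp
    finally show ?thesis by simp
  qed
  ultimately have "K * \<delta>\<^sup>2 * (unit_ball_vol (DIM('a)) * (1/2) ^ DIM('a)) \<le> (\<integral>z. gauss_pdf z * (s z - p)\<^sup>2 \<partial>lborel)"
    by linarith
  then show ?thesis unfolding K_def \<delta>_def .
qed



lemma seq_conv:
  fixes a b :: "nat \<Rightarrow> 'a::real_normed_vector" and \<rho> :: "nat \<Rightarrow> real"
  assumes rec: "\<And>t. b (Suc t) = \<rho> t *\<^sub>R b t"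
    and \<rho>01: "\<And>t. 0 \<le> \<rho> t" "\<And>t. \<rho> t \<le> 1"
    and ab: "\<And>t. norm (a (Suc t)) \<le> norm (b (Suc t))"
    and contr: "\<And>\<epsilon>. 0 < \<epsilon> \<Longrightarrow> \<exists>\<delta>>0. \<forall>t. 1 \<le> t \<longrightarrow> \<epsilon> \<le> norm (b t) \<longrightarrow> \<rho> t \<le> 1 - \<delta>"
  shows "(a \<longlongrightarrow> 0) sequentially" and "(b \<longlongrightarrow> 0) sequentially"
proof -
  have dec: "norm (b (Suc t)) \<le> norm (b t)" for t
  proof -
    have "norm (b (Suc t)) = \<rho> t * norm (b t)" using rec \<rho>01 by simp
    also have "\<dots> \<le> 1 * norm (b t)" by (rule mult_right_mono) (use \<rho>01 in auto)
    finally show ?thesis by simp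
  qed
  have decm: "norm (b n) \<le> norm (b m)" if "m \<le> n" for m n
    using that
  proof (induction n)
    case 0 then show ?case by simp
  next
    case (Suc n)
    show ?case
    proof (cases "m = Suc n")
      case True then show ?thesis by simp
    next
      case False then have "m \<le> n" using Suc.prems by simp
      then show ?thesis using Suc.IH dec[of n] by linarith
    qed
  qed
  have ev: "eventually (\<lambda>t. norm (b t) < \<epsilon>) sequentially" if \<epsilon>: "0 < \<epsilon>" for \<epsilon>
  proof (rule ccontr)
    assume nev: "\<not> eventually (\<lambda>t. norm (b t) < \<epsilon>) sequentially"
    have all: "\<epsilon> \<le> norm (b t)" for t
    proof (rule ccontr)
      assume "\<not> \<epsilon> \<le> norm (b t)"
      then have "norm (b t) < \<epsilon>" by simp
      then have "eventually (\<lambda>n. norm (b n) < \<epsilon>) sequentially"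
        unfolding eventually_sequentially using decm by (meson le_less_trans)
      then show False using nev by simp
    qed
    obtain \<delta> where \<delta>: "0 < \<delta>" and c: "\<And>t. 1 \<le> t \<Longrightarrow> \<epsilon> \<le> norm (b t) \<Longrightarrow> \<rho> t \<le> 1 - \<delta>"
      using contr[OF \<epsilon>] by blast
    have \<delta>1: "\<delta> \<le> 1" using c[of 1] all[of 1] \<rho>01(1)[of 1] by simp
    have pw: "norm (b (Suc n)) \<le> (1 - \<delta>) ^ n * norm (b 1)" for n
    proof (induction n)
      case 0 then show ?case by simp
    next
      case (Suc n)
      have "norm (b (Suc (Suc n))) = \<rho> (Suc n) * norm (b (Suc n))" using rec \<rho>01 by simp
      also have "\<dots> \<le> (1 - \<delta>) * norm (b (Suc n))"
        by (rule mult_right_mono) (use c[of "Suc n"] all in auto)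
      also have "\<dots> \<le> (1 - \<delta>) * ((1 - \<delta>) ^ n * norm (b 1))"
        by (rule mult_left_mono[OF Suc.IH]) (use \<delta>1 in simp)
      finally show ?case by simp
    qed
    have "((\<lambda>n. (1 - \<delta>) ^ n * norm (b 1)) \<longlongrightarrow> 0 * norm (b 1)) sequentially"
      by (intro tendsto_mult_right LIMSEQ_realpow_zero) (use \<delta> \<delta>1 in auto)
    then have "eventually (\<lambda>n. (1 - \<delta>) ^ n * norm (b 1) < \<epsilon>) sequentially"
      using \<epsilon> by (simp add: order_tendsto_iff)
    then obtain n where "(1 - \<delta>) ^ n * norm (b 1) < \<epsilon>" by (auto simp: eventually_sequentially)
    then show False using pw[of n] all[of "Suc n"] by simp
  qed
  show bt: "(b \<longlongrightarrow> 0) sequentially"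
    unfolding tendsto_iff dist_norm using ev by simp
  have nb: "((\<lambda>t. norm (b t)) \<longlongrightarrow> 0) sequentially" using tendsto_norm_zero[OF bt] .
  show "(a \<longlongrightarrow> 0) sequentially"
  proof (rule Lim_null_comparison[OF _ nb])
    show "eventually (\<lambda>t. norm (a t) \<le> norm (b t)) sequentially"
      unfolding eventually_sequentially
    proof (intro exI allI impI)
      fix t :: nat assume "1 \<le> t"
      then obtain k where "t = Suc k" by (cases t) auto
      then show "norm (a t) \<le> norm (b t)" using ab by simp
    qed
  qed
qed



lemma vec1: "((c + x *\<^sub>R b) - (c - y *\<^sub>R b)) /\<^sub>R 2 = ((x + y) / 2) *\<^sub>R (b::'a::real_vector)"
proof -
  have e: "(c + x *\<^sub>R b) - (c - y *\<^sub>R b) = (x + y) *\<^sub>R b" by (simp add: scaleR_add_left)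
  have f: "inverse 2 * (x + y) = (x + y) / 2" by (simp add: field_simps)
  show ?thesis unfolding e scaleR_scaleR f ..
qed
lemma vec2: "((c - y *\<^sub>R b) + (c + x *\<^sub>R b)) /\<^sub>R 2 - c = ((x - y) / 2) *\<^sub>R (b::'a::real_vector)"
proof -
  have e: "(c - y *\<^sub>R b) + (c + x *\<^sub>R b) = 2 *\<^sub>R c + (x - y) *\<^sub>R b" by (simp add: scaleR_diff_left scaleR_2)
  have f: "inverse 2 * (x - y) = (x - y) / 2" by (simp add: field_simps)
  have g: "inverse (2::real) * 2 = 1" by simp
  show ?thesis unfolding e scaleR_add_right scaleR_scaleR f g by simp
qed
lemma scal: "(2 * q / (1 - p) + 2 * q / p) / 2 = q / p + q / (1 - p)" for p q :: real
  by (simp add: field_simps)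

theorem theorem5:
  fixes m1s m2s m10 m20 :: "'a::euclidean_space"
  defines "a \<equiv> (\<lambda>t. (fst (em_iter m1s m2s m10 m20 t) + snd (em_iter m1s m2s m10 m20 t)) /\<^sub>R 2
                     - (m1s + m2s) /\<^sub>R 2)"
      and "b \<equiv> (\<lambda>t. (snd (em_iter m1s m2s m10 m20 t) - fst (em_iter m1s m2s m10 m20 t)) /\<^sub>R 2)"
      and "\<theta> \<equiv> (m2s - m1s) /\<^sub>R 2"
  assumes "inner (b 0) \<theta> = 0"
  shows "((\<lambda>t. (a t, b t)) \<longlongrightarrow> (0, 0)) sequentially"
proof -
  define \<mu> where "\<mu> t = em_iter m1s m2s m10 m20 t" for t
  define c where "c = (m1s + m2s) /\<^sub>R 2"
  have a_eq: "a t = (fst (\<mu> t) + snd (\<mu> t)) /\<^sub>R 2 - c" for t unfolding a_def \<mu>_def c_def by simp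
  have b_eq: "b t = (snd (\<mu> t) - fst (\<mu> t)) /\<^sub>R 2" for t unfolding b_def \<mu>_def by simp
  define \<kappa> where "\<kappa> t = a t \<bullet> b t" for t
  define s where "s t = (\<lambda>z. LL (z \<bullet> (2 *\<^sub>R b t) + (- 2 * \<kappa> t)))" for t
  define p where "p t = (\<integral>z. gauss_pdf z * s t z \<partial>lborel)" for t
  define q where "q t = (\<integral>z. gauss_pdf z * (s t z * (1 - s t z)) \<partial>lborel)" for t
  define V where "V t = (\<integral>z. gauss_pdf z * (s t z - p t)\<^sup>2 \<partial>lborel)" for t
  define \<rho> where "\<rho> t = q t / p t + q t / (1 - p t)" for t
  have iter: "\<mu> (Suc t) = em_step m1s m2s (fst (\<mu> t), snd (\<mu> t))" for t
    unfolding \<mu>_def em_iter_def by simp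
  have step: "\<mu> (Suc t) = (c - (2 * q t / p t) *\<^sub>R b t, c + (2 * q t / (1 - p t)) *\<^sub>R b t)"
    and p01: "0 < p t" "p t < 1" if o: "b t \<bullet> \<theta> = 0" for t
  proof -
    note sf = step_formula[where c=c and \<theta>=\<theta> and m="(fst (\<mu> t) + snd (\<mu> t)) /\<^sub>R 2" and b="b t"
        and \<kappa>="\<kappa> t" and s="s t" and p="p t" and q="q t" and m1s=m1s and m2s=m2s and \<nu>="fst (\<mu> t)" and \<omega>="snd (\<mu> t)"]
    have h: "c = (m1s + m2s) /\<^sub>R 2" "\<theta> = (m2s - m1s) /\<^sub>R 2" "b t = (snd (\<mu> t) - fst (\<mu> t)) /\<^sub>R 2"
      "\<kappa> t = ((fst (\<mu> t) + snd (\<mu> t)) /\<^sub>R 2 - c) \<bullet> b t"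
      "s t = (\<lambda>z. LL (z \<bullet> (2 *\<^sub>R b t) + - 2 * \<kappa> t))"
      "p t = (\<integral>z. gauss_pdf z * s t z \<partial>lborel)" "q t = (\<integral>z. gauss_pdf z * (s t z * (1 - s t z)) \<partial>lborel)"
      using c_def \<theta>_def b_eq \<kappa>_def a_eq s_def p_def q_def by auto
    show "\<mu> (Suc t) = (c - (2 * q t / p t) *\<^sub>R b t, c + (2 * q t / (1 - p t)) *\<^sub>R b t)"
      using sf(1)[OF h(1,2) refl h(3,4,5,6,7) o] iter by simp
    show "0 < p t" "p t < 1" using sf(2,3)[OF h(1,2) refl h(3,4,5,6,7) o] by auto
  qed
  have bS: "b (Suc t) = \<rho> t *\<^sub>R b t" and aS: "a (Suc t) = (q t / (1 - p t) - q t / p t) *\<^sub>R b t"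
    if o: "b t \<bullet> \<theta> = 0" for t
  proof -
    have pn: "p t \<noteq> 0" "1 - p t \<noteq> 0" using p01[OF o] by auto
    show "b (Suc t) = \<rho> t *\<^sub>R b t"
      unfolding b_eq[of "Suc t"] step[OF o] prod.sel vec1 scal \<rho>_def ..
    have f: "(2 * q t / (1 - p t) - 2 * q t / p t) / 2 = q t / (1 - p t) - q t / p t"
      using pn by (simp add: field_simps)
    show "a (Suc t) = (q t / (1 - p t) - q t / p t) *\<^sub>R b t"
      unfolding a_eq[of "Suc t"] step[OF o] prod.sel vec2 f ..
  qed
  have orth: "b t \<bullet> \<theta> = 0" for t
  proof (induction t)
    case 0 then show ?case using assms(4) by simp
  next
    case (Suc t) then show ?case using bS[OF Suc] by simp
  qed
  have sm: "s t \<in> borel_measurable borel" for t unfolding s_def by measurable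
  have s01: "0 \<le> s t z" "s t z \<le> 1" for t z
    unfolding s_def using LL_pos LL_lt1 less_imp_le by blast+
  have vi: "q t = p t * (1 - p t) - V t" "0 \<le> V t" "0 \<le> q t" for t
    using var_identity[OF sm s01 p_def q_def] unfolding V_def by auto
  have \<rho>eq: "\<rho> t = 1 - V t / (p t * (1 - p t))" for t
  proof -
    have w: "0 < p t * (1 - p t)" using p01[OF orth] by simp
    have "\<rho> t = q t / (p t * (1 - p t))"
      unfolding \<rho>_def using p01[OF orth[of t]] by (simp add: field_simps)
    also have "\<dots> = 1 - V t / (p t * (1 - p t))" unfolding vi(1) using w p01[OF orth[of t]] by (simp add: diff_divide_distrib)
    finally show ?thesis .
  qed
  have \<rho>01: "0 \<le> \<rho> t" "\<rho> t \<le> 1" for t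
  proof -
    have w: "0 < p t * (1 - p t)" using p01[OF orth] by simp
    show "\<rho> t \<le> 1" unfolding \<rho>eq using w vi(2)[of t] by simp
    show "0 \<le> \<rho> t" unfolding \<rho>_def using p01[OF orth[of t]] vi(3)[of t] by simp
  qed
  have \<rho>V: "\<rho> t \<le> 1 - 4 * V t" for t
  proof -
    have w: "0 < p t * (1 - p t)" using p01[OF orth] by simp
    have w4: "p t * (1 - p t) \<le> 1/4"
    proof -
      have "0 \<le> (p t - 1/2)\<^sup>2" by simp
      then show ?thesis by (simp add: power2_eq_square algebra_simps)
    qed
    have "V t * 4 \<le> V t / (p t * (1 - p t))"
    proof -
      have "V t * (p t * (1 - p t)) * 4 \<le> V t * (1/4) * 4"
        using w4 vi(2)[of t] by (intro mult_right_mono mult_left_mono) auto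
      then have "V t * 4 * (p t * (1 - p t)) \<le> V t" by (simp add: algebra_simps)
      then show ?thesis using w by (simp add: le_divide_eq)
    qed
    then show ?thesis unfolding \<rho>eq by simp
  qed
  have ab: "norm (a (Suc t)) \<le> norm (b (Suc t))" for t
  proof -
    have pp: "0 < p t" "p t < 1" using p01[OF orth[of t]] by auto
    have q0: "0 \<le> q t" by (rule vi(3))
    have x: "0 \<le> q t / (1 - p t)" "0 \<le> q t / p t" using pp q0 by simp_all
    have "\<bar>q t / (1 - p t) - q t / p t\<bar> \<le> \<rho> t" unfolding \<rho>_def using x by linarith
    then have "\<bar>q t / (1 - p t) - q t / p t\<bar> * norm (b t) \<le> \<rho> t * norm (b t)"
      by (rule mult_right_mono) simp
    then show ?thesis unfolding aS[OF orth] bS[OF orth] using \<rho>01[of t] by simp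
  qed
  have decm: "norm (b t) \<le> norm (b 0)" for t
  proof (induction t)
    case 0 then show ?case by simp
  next
    case (Suc t)
    have "norm (b (Suc t)) = \<rho> t * norm (b t)" unfolding bS[OF orth] using \<rho>01[of t] by simp
    also have "\<dots> \<le> 1 * norm (b t)" by (rule mult_right_mono) (use \<rho>01 in auto)
    finally show ?case using Suc.IH by simp
  qed
  have contr: "\<exists>\<delta>>0. \<forall>t. 1 \<le> t \<longrightarrow> \<epsilon> \<le> norm (b t) \<longrightarrow> \<rho> t \<le> 1 - \<delta>" if \<epsilon>: "0 < \<epsilon>" for \<epsilon>
  proof -
    define M where "M = norm (b 0)"
    define r where "r = (2 * pi) powr (- real DIM('a) / 2) * exp (- (M + 2)\<^sup>2 / 2) * (LL (- 2 * \<epsilon>) - 1/2)\<^sup>2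
           * (unit_ball_vol (DIM('a)) * (1/2) ^ DIM('a))"
    have r: "0 < r"
    proof -
      have "1/2 < LL (- (2 * \<epsilon>))" using LL_half[of "2 * \<epsilon>"] \<epsilon> by simp
      then have "0 < (LL (- 2 * \<epsilon>) - 1/2)\<^sup>2" by simp
      moreover have "0 < unit_ball_vol (DIM('a))" by simp
      ultimately show ?thesis unfolding r_def by simp
    qed
    have "\<rho> t \<le> 1 - 4 * r" if t: "1 \<le> t" "\<epsilon> \<le> norm (b t)" for t
    proof -
      obtain k where k: "t = Suc k" using t(1) by (cases t) auto
      have "\<bar>\<kappa> t\<bar> \<le> norm (a t) * norm (b t)" unfolding \<kappa>_def by (rule Cauchy_Schwarz_ineq2)
      also have "\<dots> \<le> M * norm (b t)"
        using ab[of k] decm[of t] unfolding k M_def by (intro mult_right_mono) auto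
      finally have kap: "\<bar>\<kappa> t\<bar> \<le> M * norm (b t)" .
      have "r \<le> V t" unfolding r_def V_def
        by (rule var_lower[OF \<epsilon> t(2) kap s_def[of t] p_def[of t]])
      then show ?thesis using \<rho>V[of t] by simp
    qed
    then show ?thesis using r by (intro exI[of _ "4 * r"]) auto
  qed
  have lim: "(a \<longlongrightarrow> 0) sequentially" "(b \<longlongrightarrow> 0) sequentially"
    using seq_conv[of b \<rho> a, OF bS[OF orth] \<rho>01 ab contr] by auto
  show ?thesis by (rule tendsto_Pair[OF lim])
qed


end
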